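(* Let $\alpha\in\ell^0(\mathbb{Z})$ with $\operatorname{supp}\alpha=I$, let $u=\sum_{i\in\mathbb{Z}}\alpha_i e_i$ be the source, $v=Ku$, and let $v^\varepsilon$ be noisy data with $\|v^\varepsilon-v\|\le\varepsilon$, with noise-to-signal ratio \[ r_{\varepsilon/\alpha}:=\frac{\sup_{i\in\mathbb{Z}}|\langle v^\varepsilon-v,d_i\rangle|}{\min_{i\in I}|\alpha_i|\,\|Ke_i\|}<\frac12. \] Suppose the $\varepsilon$ERC holds, i.e. $\sup_{i\in I}\sum_{j\in I,\,j\neq i}|\langle d_i,d_j\rangle|<1$ and \[ \sup_{d\in\mathscr{D}(I^\complement)}\big\|(DP_I)^\dagger d\big\|_{\ell^1}<1-2\,r_{\varepsilon/\alpha}\,\frac{1}{1-\sup_{i\in I}\sum_{j\in I,\,j\neq i}|\langle d_i,d_j\rangle|}. \] Then there exists a constant $C>0$ such that the approximate solution $\hat\alpha$ determined by OMP satisfies $\|\hat\alpha-\alpha\|_{\ell^1}\le C\varepsilon$.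
   Context: $B$ is a Banach space, $H$ a real Hilbert space, and $K:B\to H$ a bounded, injective, linear operator. $\mathscr{E}=\{e_i\}_{i\in\mathbb{Z}}\subset B$ is a family of unit-norm vectors, $d_i:=Ke_i/\|Ke_i\|$, $\mathscr{D}=\{d_i\}$, $\mathscr{E}(J)=\{e_i:i\in J\}$, $\mathscr{D}(J)=\{d_i:i\in J\}$ for $J\subset\mathbb{Z}$, $I^\complement=\mathbb{Z}\setminus I$. $D:\ell^1\to H$, $D\beta=\sum_i\beta_id_i$; $P_J$ is the coordinate projection onto $J$ in $\ell^1$; $(DP_I)^\dagger$ is the pseudoinverse of $DP_I$. Orthogonal Matching Pursuit (OMP) with parameter $\varepsilon$ on data $v^\varepsilon$: set $k=0$, $I^0=\emptyset$, $r^0=v^\varepsilon$, $\hat u^0=0$; while $\|r^k\|>\varepsilon$: $k:=k+1$, choose $i_k\in\operatorname{argsup}_i|\langle r^{k-1},d_i\rangle|$, $I^k=I^{k-1}\cup\{i_k\}$, $\hat u^k\in\operatorname{argmin}\{\|v^\varepsilon-K\hat u\|^2:\hat u\in\operatorname{span}\mathscr{E}(I^k)\}$, $r^k=v^\varepsilon-K\hat u^k$. The approximate solution $\hat\alpha$ is the coefficient vector of the final iterate, $\hat u=\sum_i\hat\alpha_ie_i$ (with $\hat\alpha_i=0$ for non-selected indices). *)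

theory Defs
  imports "HOL-Analysis.Analysis"
begin

definition dict :: "('b::real_normed_vector \<Rightarrow> 'h::real_normed_vector) \<Rightarrow> (int \<Rightarrow> 'b) \<Rightarrow> int \<Rightarrow> 'h" where
  "dict K e i = (1 / norm (K (e i))) *\<^sub>R K (e i)"

definition l1norm :: "(int \<Rightarrow> real) \<Rightarrow> real" where
  "l1norm x = infsum (\<lambda>i. \<bar>x i\<bar>) UNIV"

definition supp :: "(int \<Rightarrow> real) \<Rightarrow> int set" where
  "supp x = {i. x i \<noteq> 0}"

definition lsq_sol :: "('b::real_normed_vector \<Rightarrow> 'h::real_normed_vector) \<Rightarrow> (int \<Rightarrow> 'b) \<Rightarrow> int set \<Rightarrow> 'h \<Rightarrow> (int \<Rightarrow> real) \<Rightarrow> bool" where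
  "lsq_sol K e I h \<beta> \<longleftrightarrow> (\<forall>i. i \<notin> I \<longrightarrow> \<beta> i = 0) \<and>
     (\<forall>\<gamma>. (\<forall>i. i \<notin> I \<longrightarrow> \<gamma> i = 0) \<longrightarrow>
        norm (h - (\<Sum>i\<in>I. \<beta> i *\<^sub>R dict K e i)) \<le> norm (h - (\<Sum>i\<in>I. \<gamma> i *\<^sub>R dict K e i)))"

text \<open>Moore--Penrose pseudoinverse (D P_I)^dagger: the minimal (Euclidean) norm
  least-squares solution, supported on the finite set I.\<close>
definition pinv :: "('b::real_normed_vector \<Rightarrow> 'h::real_normed_vector) \<Rightarrow> (int \<Rightarrow> 'b) \<Rightarrow> int set \<Rightarrow> 'h \<Rightarrow> (int \<Rightarrow> real)" where
  "pinv K e I h = (THE \<beta>. lsq_sol K e I h \<beta> \<and>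
      (\<forall>\<gamma>. lsq_sol K e I h \<gamma> \<longrightarrow> (\<Sum>i\<in>I. (\<beta> i)\<^sup>2) \<le> (\<Sum>i\<in>I. (\<gamma> i)\<^sup>2)))"

definition coh :: "('b::real_normed_vector \<Rightarrow> 'h::real_inner) \<Rightarrow> (int \<Rightarrow> 'b) \<Rightarrow> int set \<Rightarrow> real" where
  "coh K e I = (if I = {} then 0 else
     Max ((\<lambda>i. \<Sum>j\<in>I - {i}. \<bar>dict K e i \<bullet> dict K e j\<bar>) ` I))"

text \<open>Noise-to-signal ratio r_{eps/alpha}; v = K u with u = sum alpha_i e_i.
  (If alpha = 0 the minimum over the empty set is +infinity, so the ratio is 0.)\<close>
definition nsr :: "('b::real_normed_vector \<Rightarrow> 'h::real_inner) \<Rightarrow> (int \<Rightarrow> 'b) \<Rightarrow> (int \<Rightarrow> real) \<Rightarrow> 'h \<Rightarrow> real" where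
  "nsr K e \<alpha> v\<epsilon> = (if supp \<alpha> = {} then 0 else
     (SUP i. \<bar>(v\<epsilon> - K (\<Sum>j\<in>supp \<alpha>. \<alpha> j *\<^sub>R e j)) \<bullet> dict K e i\<bar>)
       / Min ((\<lambda>i. \<bar>\<alpha> i\<bar> * norm (K (e i))) ` supp \<alpha>))"

text \<open>Reachable OMP states: (selected index set J, coefficients beta of the iterate
  u^k = sum_{i in J} beta_i e_i, supported on J).\<close>
inductive omp_reach :: "('b::real_normed_vector \<Rightarrow> 'h::real_inner) \<Rightarrow> (int \<Rightarrow> 'b) \<Rightarrow> real \<Rightarrow> 'h \<Rightarrow> int set \<Rightarrow> (int \<Rightarrow> real) \<Rightarrow> bool"
  for K e \<epsilon> v\<epsilon> where
  init: "omp_reach K e \<epsilon> v\<epsilon> {} (\<lambda>_. 0)"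
| step: "\<lbrakk> omp_reach K e \<epsilon> v\<epsilon> J \<beta>;
           norm (v\<epsilon> - K (\<Sum>i\<in>J. \<beta> i *\<^sub>R e i)) > \<epsilon>;
           \<forall>j. \<bar>(v\<epsilon> - K (\<Sum>i\<in>J. \<beta> i *\<^sub>R e i)) \<bullet> dict K e j\<bar>
                 \<le> \<bar>(v\<epsilon> - K (\<Sum>i\<in>J. \<beta> i *\<^sub>R e i)) \<bullet> dict K e k\<bar>;
           \<forall>i. i \<notin> insert k J \<longrightarrow> \<beta>' i = 0;
           \<forall>\<gamma>. (\<forall>i. i \<notin> insert k J \<longrightarrow> \<gamma> i = 0) \<longrightarrow>
              (norm (v\<epsilon> - K (\<Sum>i\<in>insert k J. \<beta>' i *\<^sub>R e i)))\<^sup>2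
                \<le> (norm (v\<epsilon> - K (\<Sum>i\<in>insert k J. \<gamma> i *\<^sub>R e i)))\<^sup>2 \<rbrakk>
         \<Longrightarrow> omp_reach K e \<epsilon> v\<epsilon> (insert k J) \<beta>'"

text \<open>alpha_hat is a possible output of OMP: coefficient vector of a final (stopping) iterate.\<close>
definition omp_result :: "('b::real_normed_vector \<Rightarrow> 'h::real_inner) \<Rightarrow> (int \<Rightarrow> 'b) \<Rightarrow> real \<Rightarrow> 'h \<Rightarrow> (int \<Rightarrow> real) \<Rightarrow> bool" where
  "omp_result K e \<epsilon> v\<epsilon> \<alpha>h \<longleftrightarrow> (\<exists>J. omp_reach K e \<epsilon> v\<epsilon> J \<alpha>h \<and>
      norm (v\<epsilon> - K (\<Sum>i\<in>J. \<alpha>h i *\<^sub>R e i)) \<le> \<epsilon>)"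

end

theory Submission imports Defs begin

lemma l1norm_fin:
  assumes "finite I" "\<forall>i. i \<notin> I \<longrightarrow> x i = 0"
  shows "l1norm x = (\<Sum>i\<in>I. \<bar>x i\<bar>)"
proof -
  have "l1norm x = infsum (\<lambda>i. \<bar>x i\<bar>) I"
    unfolding l1norm_def by (rule infsum_cong_neutral) (use assms in auto)
  also have "\<dots> = (\<Sum>i\<in>I. \<bar>x i\<bar>)" using assms(1) by simp
  finally show ?thesis .
qed

lemma inner_sum_sc: "(x::'h::real_inner) \<bullet> (\<Sum>i\<in>S. a i *\<^sub>R d i) = (\<Sum>i\<in>S. a i * (x \<bullet> d i))"
  by (simp add: inner_sum_right)

lemma inner_sum_sc2: "(\<Sum>i\<in>S. a i *\<^sub>R d i) \<bullet> (x::'h::real_inner) = (\<Sum>i\<in>S. a i * (d i \<bullet> x))"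
  by (simp add: inner_sum_left)

lemma proj_exists:
  fixes d :: "int \<Rightarrow> 'h::real_inner"
  assumes "finite I"
  shows "\<exists>c. (\<forall>i. i \<notin> I \<longrightarrow> c i = 0) \<and> (\<forall>j\<in>I. (h - (\<Sum>i\<in>I. c i *\<^sub>R d i)) \<bullet> d j = 0)"
  using assms
proof (induction I arbitrary: h rule: finite_induct)
  case empty
  show ?case by (rule exI[of _ "\<lambda>_. 0"]) simp
next
  case (insert u S)
  obtain c where c0: "\<forall>i. i \<notin> S \<longrightarrow> c i = 0" and c1: "\<forall>j\<in>S. (h - (\<Sum>i\<in>S. c i *\<^sub>R d i)) \<bullet> d j = 0"
    using insert.IH by blast
  obtain \<delta> where d0: "\<forall>i. i \<notin> S \<longrightarrow> \<delta> i = 0" and d1: "\<forall>j\<in>S. (d u - (\<Sum>i\<in>S. \<delta> i *\<^sub>R d i)) \<bullet> d j = 0"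
    using insert.IH by blast
  define r where "r = h - (\<Sum>i\<in>S. c i *\<^sub>R d i)"
  define w where "w = d u - (\<Sum>i\<in>S. \<delta> i *\<^sub>R d i)"
  have rS: "\<forall>j\<in>S. r \<bullet> d j = 0" using c1 r_def by simp
  have wS: "\<forall>j\<in>S. w \<bullet> d j = 0" using d1 w_def by simp
  have du: "d u = w + (\<Sum>i\<in>S. \<delta> i *\<^sub>R d i)" using w_def by simp
  have rsum: "r \<bullet> (\<Sum>i\<in>S. \<delta> i *\<^sub>R d i) = 0"
    unfolding inner_sum_sc using rS by simp
  have wsum: "w \<bullet> (\<Sum>i\<in>S. \<delta> i *\<^sub>R d i) = 0"
    unfolding inner_sum_sc using wS by simp
  define t where "t = (r \<bullet> w) / (w \<bullet> w)"
  define c' where "c' = (\<lambda>i. if i = u then t else if i \<in> S then c i - t * \<delta> i else 0)"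
  have sumc': "(\<Sum>i\<in>insert u S. c' i *\<^sub>R d i) = (\<Sum>i\<in>S. c i *\<^sub>R d i) + t *\<^sub>R w"
  proof -
    have "(\<Sum>i\<in>insert u S. c' i *\<^sub>R d i) = t *\<^sub>R d u + (\<Sum>i\<in>S. c' i *\<^sub>R d i)"
      using insert.hyps by (simp add: c'_def)
    also have "(\<Sum>i\<in>S. c' i *\<^sub>R d i) = (\<Sum>i\<in>S. c i *\<^sub>R d i - t *\<^sub>R (\<delta> i *\<^sub>R d i))"
      using insert.hyps by (intro sum.cong) (auto simp: c'_def algebra_simps)
    also have "\<dots> = (\<Sum>i\<in>S. c i *\<^sub>R d i) - t *\<^sub>R (\<Sum>i\<in>S. \<delta> i *\<^sub>R d i)"
      by (simp add: sum_subtractf scaleR_sum_right)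
    finally show ?thesis unfolding w_def by (simp add: algebra_simps)
  qed
  have res: "h - (\<Sum>i\<in>insert u S. c' i *\<^sub>R d i) = r - t *\<^sub>R w"
    unfolding sumc' r_def by simp
  show ?case
  proof (cases "w \<bullet> w = 0")
    case True
    hence w0: "w = 0" by simp
    show ?thesis
    proof (intro exI[of _ c] conjI allI impI ballI)
      fix i assume "i \<notin> insert u S" thus "c i = 0" using c0 by auto
    next
      fix j assume j: "j \<in> insert u S"
      have eq: "(\<Sum>i\<in>insert u S. c i *\<^sub>R d i) = (\<Sum>i\<in>S. c i *\<^sub>R d i)"
        using insert.hyps c0 by simp
      show "(h - (\<Sum>i\<in>insert u S. c i *\<^sub>R d i)) \<bullet> d j = 0"
      proof (cases "j = u")
        case True
        show ?thesis unfolding eq True du using rsum w0 r_def by (simp add: inner_add_right)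
      next
        case False thus ?thesis using j c1 eq by auto
      qed
    qed
  next
    case False
    show ?thesis
    proof (intro exI[of _ c'] conjI allI impI ballI)
      fix i assume "i \<notin> insert u S" thus "c' i = 0" by (auto simp: c'_def)
    next
      fix j assume j: "j \<in> insert u S"
      show "(h - (\<Sum>i\<in>insert u S. c' i *\<^sub>R d i)) \<bullet> d j = 0"
      proof (cases "j = u")
        case True
        have "(r - t *\<^sub>R w) \<bullet> w = 0" using False by (simp add: t_def inner_diff_left)
        thus ?thesis unfolding res True du using rsum wsum by (simp add: inner_add_right inner_diff_left)
      next
        case False thus ?thesis using j rS wS unfolding res by (simp add: inner_diff_left)
      qed
    qed
  qed
qed


lemma perturb:
  fixes d :: "int \<Rightarrow> 'h::real_inner"
  assumes fin: "finite I" and nd: "\<forall>j\<in>I. norm (d j) = 1"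
    and c0: "\<forall>i. i \<notin> I \<longrightarrow> c i = 0"
    and mn: "\<forall>\<gamma>. (\<forall>i. i \<notin> I \<longrightarrow> \<gamma> i = 0) \<longrightarrow> norm (h - (\<Sum>i\<in>I. c i *\<^sub>R d i)) \<le> norm (h - (\<Sum>i\<in>I. \<gamma> i *\<^sub>R d i))"
  shows "\<forall>j\<in>I. (h - (\<Sum>i\<in>I. c i *\<^sub>R d i)) \<bullet> d j = 0"
proof
  fix j assume j: "j \<in> I"
  define r where "r = h - (\<Sum>i\<in>I. c i *\<^sub>R d i)"
  define t where "t = r \<bullet> d j"
  define \<gamma> where "\<gamma> = (\<lambda>i. c i + (if i = j then t else 0))"
  have g0: "\<forall>i. i \<notin> I \<longrightarrow> \<gamma> i = 0" using c0 j by (auto simp: \<gamma>_def)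
  have "(\<Sum>i\<in>I. \<gamma> i *\<^sub>R d i) = (\<Sum>i\<in>I. c i *\<^sub>R d i) + (\<Sum>i\<in>I. (if i = j then t else 0) *\<^sub>R d i)"
    by (simp add: \<gamma>_def scaleR_add_left sum.distrib)
  also have "(\<Sum>i\<in>I. (if i = j then t else 0) *\<^sub>R d i) = t *\<^sub>R d j"
    using fin j by (simp add: if_distrib[of "\<lambda>x. x *\<^sub>R _"] sum.delta cong: if_cong)
  finally have sg: "h - (\<Sum>i\<in>I. \<gamma> i *\<^sub>R d i) = r - t *\<^sub>R d j" by (simp add: r_def)
  have "norm r \<le> norm (r - t *\<^sub>R d j)" using mn g0 sg r_def by metis
  hence "(norm r)\<^sup>2 \<le> (norm (r - t *\<^sub>R d j))\<^sup>2" by simp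
  also have "(norm (r - t *\<^sub>R d j))\<^sup>2 = r \<bullet> r - 2 * t * (r \<bullet> d j) + t * t * (d j \<bullet> d j)"
    unfolding power2_norm_eq_inner by (simp add: inner_diff_left inner_diff_right algebra_simps inner_commute)
  also have "d j \<bullet> d j = 1" using nd j by (metis norm_eq_sqrt_inner real_sqrt_eq_1_iff)
  finally have "0 \<le> - t\<^sup>2" unfolding power2_norm_eq_inner by (simp add: t_def power2_eq_square)
  hence "t = 0" by simp
  thus "(h - (\<Sum>i\<in>I. c i *\<^sub>R d i)) \<bullet> d j = 0" by (simp add: t_def r_def)
qed

lemma orth_min:
  fixes d :: "int \<Rightarrow> 'h::real_inner"
  assumes "\<forall>j\<in>I. (h - (\<Sum>i\<in>I. c i *\<^sub>R d i)) \<bullet> d j = 0"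
  shows "norm (h - (\<Sum>i\<in>I. c i *\<^sub>R d i)) \<le> norm (h - (\<Sum>i\<in>I. \<gamma> i *\<^sub>R d i))"
proof -
  define r where "r = h - (\<Sum>i\<in>I. c i *\<^sub>R d i)"
  define y where "y = (\<Sum>i\<in>I. (c i - \<gamma> i) *\<^sub>R d i)"
  have ry: "r \<bullet> y = 0" unfolding y_def inner_sum_sc using assms r_def by simp
  have "h - (\<Sum>i\<in>I. \<gamma> i *\<^sub>R d i) = r + y"
    by (simp add: r_def y_def scaleR_diff_left sum_subtractf)
  hence "(norm (h - (\<Sum>i\<in>I. \<gamma> i *\<^sub>R d i)))\<^sup>2 = (norm r)\<^sup>2 + (norm y)\<^sup>2"
    using ry by (simp add: power2_norm_eq_inner inner_add_left inner_add_right inner_commute)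
  hence "(norm r)\<^sup>2 \<le> (norm (h - (\<Sum>i\<in>I. \<gamma> i *\<^sub>R d i)))\<^sup>2" by simp
  thus ?thesis unfolding r_def by (simp add: power2_le_iff_abs_le)
qed

definition cohd :: "(int \<Rightarrow> 'h::real_inner) \<Rightarrow> int set \<Rightarrow> real" where
  "cohd d I = (if I = {} then 0 else Max ((\<lambda>i. \<Sum>j\<in>I - {i}. \<bar>d i \<bullet> d j\<bar>) ` I))"

lemma DD:
  fixes d :: "int \<Rightarrow> 'h::real_inner"
  assumes fin: "finite I" and ne: "I \<noteq> {}" and nd: "\<forall>j\<in>I. norm (d j) = 1" and ch: "cohd d I < 1"
  shows "\<exists>j0\<in>I. \<forall>j\<in>I. \<bar>\<gamma> j\<bar> * (1 - cohd d I) \<le> \<bar>(\<Sum>i\<in>I. \<gamma> i *\<^sub>R d i) \<bullet> d j0\<bar>"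
proof -
  define M where "M = Max ((\<lambda>j. \<bar>\<gamma> j\<bar>) ` I)"
  have "M \<in> (\<lambda>j. \<bar>\<gamma> j\<bar>) ` I" unfolding M_def using fin ne by (intro Max_in) auto
  then obtain j0 where j0: "j0 \<in> I" "\<bar>\<gamma> j0\<bar> = M" by auto
  have jle: "\<forall>j\<in>I. \<bar>\<gamma> j\<bar> \<le> M" unfolding M_def using fin by auto
  have row: "(\<Sum>l\<in>I - {j0}. \<bar>d j0 \<bullet> d l\<bar>) \<le> cohd d I"
    unfolding cohd_def using ne fin j0 by auto
  have split: "(\<Sum>i\<in>I. \<gamma> i *\<^sub>R d i) \<bullet> d j0 = \<gamma> j0 + (\<Sum>l\<in>I - {j0}. \<gamma> l * (d l \<bullet> d j0))"
  proof -
    have "(\<Sum>i\<in>I. \<gamma> i *\<^sub>R d i) \<bullet> d j0 = (\<Sum>l\<in>I. \<gamma> l * (d l \<bullet> d j0))" by (rule inner_sum_sc2)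
    also have "\<dots> = \<gamma> j0 * (d j0 \<bullet> d j0) + (\<Sum>l\<in>I - {j0}. \<gamma> l * (d l \<bullet> d j0))"
      using fin j0 by (simp add: sum.remove)
    also have "d j0 \<bullet> d j0 = 1" using nd j0 by (metis norm_eq_sqrt_inner real_sqrt_eq_1_iff)
    finally show ?thesis by simp
  qed
  have "\<bar>\<Sum>l\<in>I - {j0}. \<gamma> l * (d l \<bullet> d j0)\<bar> \<le> (\<Sum>l\<in>I - {j0}. \<bar>\<gamma> l * (d l \<bullet> d j0)\<bar>)"
    by (rule sum_abs)
  also have "\<dots> \<le> (\<Sum>l\<in>I - {j0}. M * \<bar>d j0 \<bullet> d l\<bar>)"
    using jle by (intro sum_mono) (auto simp: abs_mult inner_commute intro: mult_right_mono)
  also have "\<dots> = M * (\<Sum>l\<in>I - {j0}. \<bar>d j0 \<bullet> d l\<bar>)" by (simp add: sum_distrib_left)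
  also have "\<dots> \<le> M * cohd d I" using row j0 by (intro mult_left_mono) auto
  finally have bnd: "\<bar>\<Sum>l\<in>I - {j0}. \<gamma> l * (d l \<bullet> d j0)\<bar> \<le> M * cohd d I" .
  have main: "M * (1 - cohd d I) \<le> \<bar>(\<Sum>i\<in>I. \<gamma> i *\<^sub>R d i) \<bullet> d j0\<bar>"
    unfolding split using bnd j0 by (auto simp: algebra_simps abs_if split: if_splits)
  show ?thesis
  proof (intro bexI[OF _ j0(1)] ballI)
    fix j assume "j \<in> I"
    hence "\<bar>\<gamma> j\<bar> * (1 - cohd d I) \<le> M * (1 - cohd d I)" using jle ch by (intro mult_right_mono) auto
    thus "\<bar>\<gamma> j\<bar> * (1 - cohd d I) \<le> \<bar>(\<Sum>i\<in>I. \<gamma> i *\<^sub>R d i) \<bullet> d j0\<bar>" using main by linarith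
  qed
qed


lemma coh_eq: "coh K e I = cohd (dict K e) I"
  unfolding coh_def cohd_def by simp

lemma orth_unique:
  fixes d :: "int \<Rightarrow> 'h::real_inner"
  assumes fin: "finite I" and nd: "\<forall>j\<in>I. norm (d j) = 1" and ch: "cohd d I < 1"
    and b0: "\<forall>i. i \<notin> I \<longrightarrow> b i = 0" and c0: "\<forall>i. i \<notin> I \<longrightarrow> c i = 0"
    and bo: "\<forall>j\<in>I. (h - (\<Sum>i\<in>I. b i *\<^sub>R d i)) \<bullet> d j = 0"
    and co: "\<forall>j\<in>I. (h - (\<Sum>i\<in>I. c i *\<^sub>R d i)) \<bullet> d j = 0"
  shows "b = c"
proof (cases "I = {}")
  case True thus ?thesis using b0 c0 by auto
next
  case ne: False
  define x where "x = (\<Sum>i\<in>I. (b i - c i) *\<^sub>R d i)"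
  have x2: "x = (h - (\<Sum>i\<in>I. c i *\<^sub>R d i)) - (h - (\<Sum>i\<in>I. b i *\<^sub>R d i))"
    by (simp add: x_def scaleR_diff_left sum_subtractf)
  have "x \<bullet> x = x \<bullet> ((h - (\<Sum>i\<in>I. c i *\<^sub>R d i)) - (h - (\<Sum>i\<in>I. b i *\<^sub>R d i)))"
    by (subst (2) x2) (rule refl)
  also have "\<dots> = (\<Sum>i\<in>I. (b i - c i) * (d i \<bullet> ((h - (\<Sum>i\<in>I. c i *\<^sub>R d i)) - (h - (\<Sum>i\<in>I. b i *\<^sub>R d i)))))"
    unfolding x_def by (rule inner_sum_sc2)
  also have "\<dots> = 0" using bo co by (intro sum.neutral) (auto simp: inner_diff_right inner_commute)
  finally have x0: "x = 0" by simp
  obtain j0 where "j0 \<in> I" and j0: "\<forall>j\<in>I. \<bar>b j - c j\<bar> * (1 - cohd d I) \<le> \<bar>x \<bullet> d j0\<bar>"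
    using DD[OF fin ne nd ch, of "\<lambda>i. b i - c i"] x_def by auto
  show ?thesis
  proof
    fix i show "b i = c i"
    proof (cases "i \<in> I")
      case True
      hence "\<bar>b i - c i\<bar> * (1 - cohd d I) \<le> 0" using j0 x0 by auto
      thus ?thesis using ch by (simp add: mult_le_0_iff)
    next
      case False thus ?thesis using b0 c0 by auto
    qed
  qed
qed

lemma pinv_props:
  assumes fin: "finite I" and nd: "\<forall>j\<in>I. norm (dict K e j) = 1" and ch: "cohd (dict K e) I < 1"
  shows "(\<forall>i. i \<notin> I \<longrightarrow> pinv K e I h i = 0) \<and>
         (\<forall>j\<in>I. (h - (\<Sum>i\<in>I. pinv K e I h i *\<^sub>R dict K e i)) \<bullet> dict K e j = 0)"
proof -
  obtain c where c0: "\<forall>i. i \<notin> I \<longrightarrow> c i = 0" and co: "\<forall>j\<in>I. (h - (\<Sum>i\<in>I. c i *\<^sub>R dict K e i)) \<bullet> dict K e j = 0"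
    using proj_exists[OF fin, of h "dict K e"] by blast
  have lc: "lsq_sol K e I h c" unfolding lsq_sol_def using c0 orth_min[OF co] by blast
  have uq: "\<beta> = c" if "lsq_sol K e I h \<beta>" for \<beta>
  proof -
    have b0: "\<forall>i. i \<notin> I \<longrightarrow> \<beta> i = 0" using that unfolding lsq_sol_def by blast
    have "\<forall>j\<in>I. (h - (\<Sum>i\<in>I. \<beta> i *\<^sub>R dict K e i)) \<bullet> dict K e j = 0"
      using perturb[OF fin nd b0] that unfolding lsq_sol_def by blast
    thus ?thesis using orth_unique[OF fin nd ch b0 c0 _ co] by blast
  qed
  have "pinv K e I h = c" unfolding pinv_def
  proof (rule the_equality)
    show "lsq_sol K e I h c \<and> (\<forall>\<gamma>. lsq_sol K e I h \<gamma> \<longrightarrow> (\<Sum>i\<in>I. (c i)\<^sup>2) \<le> (\<Sum>i\<in>I. (\<gamma> i)\<^sup>2))"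
      using lc uq by blast
    show "\<And>\<beta>. lsq_sol K e I h \<beta> \<and> (\<forall>\<gamma>. lsq_sol K e I h \<gamma> \<longrightarrow> (\<Sum>i\<in>I. (\<beta> i)\<^sup>2) \<le> (\<Sum>i\<in>I. (\<gamma> i)\<^sup>2)) \<Longrightarrow> \<beta> = c"
      using uq by blast
  qed
  thus ?thesis using c0 co by simp
qed


lemma Ksum:
  assumes "bounded_linear K" "\<forall>j. K (e j) \<noteq> 0"
  shows "K (\<Sum>j\<in>I. a j *\<^sub>R e j) = (\<Sum>j\<in>I. (a j * norm (K (e j))) *\<^sub>R dict K e j)"
proof -
  interpret K: bounded_linear K by fact
  have "K (\<Sum>j\<in>I. a j *\<^sub>R e j) = (\<Sum>j\<in>I. a j *\<^sub>R K (e j))" by (simp add: K.sum K.scaleR)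
  also have "\<dots> = (\<Sum>j\<in>I. (a j * norm (K (e j))) *\<^sub>R dict K e j)"
    using assms(2) by (intro sum.cong) (auto simp: dict_def)
  finally show ?thesis .
qed

lemma dict_norm:
  assumes "K (e j) \<noteq> 0" shows "norm (dict K e j) = 1"
  using assms by (simp add: dict_def)

lemma abs_inner_le: "norm (d::'h::real_inner) = 1 \<Longrightarrow> \<bar>x \<bullet> d\<bar> \<le> norm x"
  using Cauchy_Schwarz_ineq2[of x d] by simp

lemma pinv_l1_bound:
  assumes fin: "finite I" and nd: "\<forall>j\<in>I. norm (dict K e j) = 1" and ch: "cohd (dict K e) I < 1"
  shows "l1norm (pinv K e I h) \<le> real (card I) * (norm h / (1 - cohd (dict K e) I))"
proof (cases "I = {}")
  case True
  have "l1norm (pinv K e I h) = (\<Sum>i\<in>I. \<bar>pinv K e I h i\<bar>)"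
    using pinv_props[OF fin nd ch] fin by (intro l1norm_fin) auto
  thus ?thesis using True by simp
next
  case ne: False
  define c where "c = pinv K e I h"
  have c0: "\<forall>i. i \<notin> I \<longrightarrow> c i = 0" and co: "\<forall>j\<in>I. (h - (\<Sum>i\<in>I. c i *\<^sub>R dict K e i)) \<bullet> dict K e j = 0"
    using pinv_props[OF fin nd ch] c_def by auto
  define x where "x = (\<Sum>i\<in>I. c i *\<^sub>R dict K e i)"
  have xr: "x \<bullet> (h - x) = 0" unfolding x_def inner_sum_sc2 using co by (simp add: inner_commute)
  have "(norm h)\<^sup>2 = (norm x)\<^sup>2 + (norm (h - x))\<^sup>2"
  proof -
    have "h = x + (h - x)" by simp
    hence "(norm h)\<^sup>2 = (norm (x + (h - x)))\<^sup>2" by simp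
    also have "\<dots> = (norm x)\<^sup>2 + (norm (h - x))\<^sup>2"
      unfolding power2_norm_eq_inner using xr by (simp only: inner_add_left inner_add_right inner_commute[of "h - x" x])
    finally show ?thesis .
  qed
  hence "(norm x)\<^sup>2 \<le> (norm h)\<^sup>2" by simp
  hence xh: "norm x \<le> norm h" by (simp add: power2_le_iff_abs_le)
  obtain j0 where "j0 \<in> I" and j0: "\<forall>j\<in>I. \<bar>c j\<bar> * (1 - cohd (dict K e) I) \<le> \<bar>x \<bullet> dict K e j0\<bar>"
    using DD[OF fin ne nd ch, of c] x_def by auto
  have "\<bar>x \<bullet> dict K e j0\<bar> \<le> norm x" using abs_inner_le nd \<open>j0 \<in> I\<close> by blast
  hence cj: "\<forall>j\<in>I. \<bar>c j\<bar> \<le> norm h / (1 - cohd (dict K e) I)"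
    using j0 xh ch by (auto simp: pos_le_divide_eq)
  have "l1norm c = (\<Sum>i\<in>I. \<bar>c i\<bar>)" using c0 fin by (intro l1norm_fin) auto
  also have "\<dots> \<le> (\<Sum>i\<in>I. norm h / (1 - cohd (dict K e) I))" using cj by (intro sum_mono) auto
  also have "\<dots> = real (card I) * (norm h / (1 - cohd (dict K e) I))" by simp
  finally show ?thesis unfolding c_def .
qed


theorem proposition12:
  fixes K :: "'b::banach \<Rightarrow> 'h::{real_inner, complete_space}"
    and e :: "int \<Rightarrow> 'b" and \<alpha> :: "int \<Rightarrow> real" and v\<epsilon> :: 'h and \<epsilon> :: real
  assumes "bounded_linear K" and "inj K"
    and "\<forall>i. norm (e i) = 1"
    and "finite (supp \<alpha>)"
    and "norm (v\<epsilon> - K (\<Sum>i\<in>supp \<alpha>. \<alpha> i *\<^sub>R e i)) \<le> \<epsilon>"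
    and "nsr K e \<alpha> v\<epsilon> < 1/2"
    and "coh K e (supp \<alpha>) < 1"
    and "(SUP i\<in>- supp \<alpha>. l1norm (pinv K e (supp \<alpha>) (dict K e i)))
           < 1 - 2 * nsr K e \<alpha> v\<epsilon> * (1 / (1 - coh K e (supp \<alpha>)))"
  shows "\<exists>C>0. \<forall>\<alpha>h. omp_result K e \<epsilon> v\<epsilon> \<alpha>h \<longrightarrow> l1norm (\<lambda>i. \<alpha>h i - \<alpha> i) \<le> C * \<epsilon>"
proof -
  note Kbl = assms(1)
  interpret K: bounded_linear K by fact
  define I where "I = supp \<alpha>"
  define d where "d = dict K e"
  define ch where "ch = cohd d I"
  define nk where "nk = (\<lambda>j. norm (K (e j)))"
  define n where "n = v\<epsilon> - K (\<Sum>i\<in>I. \<alpha> i *\<^sub>R e i)"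
  have fin: "finite I" using assms(4) I_def by simp
  have nK: "\<forall>j. K (e j) \<noteq> 0"
  proof
    fix j
    have "e j \<noteq> 0" using assms(3) by (metis norm_zero zero_neq_one)
    thus "K (e j) \<noteq> 0" using assms(2) K.zero by (metis injD)
  qed
  have nkp: "\<forall>j. nk j > 0" using nK nk_def by simp
  have nd: "\<forall>j. norm (d j) = 1" using nK dict_norm d_def by metis
  have ndI: "\<forall>j\<in>I. norm (dict K e j) = 1" using nd d_def by simp
  have chl: "ch < 1" using assms(7) coh_eq ch_def d_def I_def by metis
  have chI: "cohd (dict K e) I < 1" using chl ch_def d_def by simp
  have aI: "\<forall>i. i \<notin> I \<longrightarrow> \<alpha> i = 0" by (simp add: I_def supp_def)
  have neps: "norm n \<le> \<epsilon>" using assms(5) n_def I_def by simp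
  have eps0: "\<epsilon> \<ge> 0" using neps norm_ge_zero order_trans by blast
  have Ks: "\<And>a. K (\<Sum>j\<in>I. a j *\<^sub>R e j) = (\<Sum>j\<in>I. (a j * nk j) *\<^sub>R d j)"
    using Ksum[OF Kbl nK] nk_def d_def by simp
  have sel: "k \<in> I"
    if reach: "omp_reach K e \<epsilon> v\<epsilon> J \<beta>" and JI: "J \<subseteq> I" and b0: "\<forall>i. i \<notin> J \<longrightarrow> \<beta> i = 0"
      and JIe: "J = I \<longrightarrow> norm (v\<epsilon> - K (\<Sum>i\<in>J. \<beta> i *\<^sub>R e i)) \<le> \<epsilon>"
      and big: "norm (v\<epsilon> - K (\<Sum>i\<in>J. \<beta> i *\<^sub>R e i)) > \<epsilon>"
      and amax: "\<forall>j. \<bar>(v\<epsilon> - K (\<Sum>i\<in>J. \<beta> i *\<^sub>R e i)) \<bullet> dict K e j\<bar>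
                 \<le> \<bar>(v\<epsilon> - K (\<Sum>i\<in>J. \<beta> i *\<^sub>R e i)) \<bullet> dict K e k\<bar>"
    for J \<beta> k
  proof (rule ccontr)
    assume kI: "k \<notin> I"
    have "J \<noteq> I" using JIe big by auto
    then obtain jn where jn: "jn \<in> I" "jn \<notin> J" using JI by blast
    hence ne: "I \<noteq> {}" by auto
    define r where "r = v\<epsilon> - K (\<Sum>i\<in>J. \<beta> i *\<^sub>R e i)"
    define \<gamma> where "\<gamma> = (\<lambda>j. (\<alpha> j - \<beta> j) * nk j)"
    define s where "s = (\<Sum>j\<in>I. \<gamma> j *\<^sub>R d j)"
    have sJ: "(\<Sum>i\<in>J. \<beta> i *\<^sub>R e i) = (\<Sum>i\<in>I. \<beta> i *\<^sub>R e i)"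
      using fin JI b0 by (intro sum.mono_neutral_left) auto
    have "K (\<Sum>i\<in>I. \<alpha> i *\<^sub>R e i) - K (\<Sum>i\<in>I. \<beta> i *\<^sub>R e i) = K (\<Sum>i\<in>I. (\<alpha> i - \<beta> i) *\<^sub>R e i)"
      by (simp add: K.diff[symmetric] scaleR_diff_left sum_subtractf)
    also have "\<dots> = s" unfolding Ks s_def \<gamma>_def ..
    finally have rns: "r = n + s" unfolding r_def n_def sJ by (simp add: algebra_simps)
    define m where "m = Min ((\<lambda>i. \<bar>\<alpha> i\<bar> * nk i) ` I)"
    have "m \<in> (\<lambda>i. \<bar>\<alpha> i\<bar> * nk i) ` I" unfolding m_def using fin ne by (intro Min_in) auto
    then obtain im where im: "im \<in> I" "m = \<bar>\<alpha> im\<bar> * nk im" by auto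
    have mpos: "m > 0" using im nkp unfolding I_def supp_def by auto
    have mle: "m \<le> \<bar>\<alpha> jn\<bar> * nk jn" unfolding m_def using fin jn by auto
    have gjn: "\<bar>\<gamma> jn\<bar> = \<bar>\<alpha> jn\<bar> * nk jn" using b0 jn nkp[rule_format, of jn] by (simp add: \<gamma>_def abs_mult)
    define N where "N = (SUP i. \<bar>n \<bullet> d i\<bar>)"
    have bddN: "bdd_above (range (\<lambda>i. \<bar>n \<bullet> d i\<bar>))"
      using abs_inner_le nd by (intro bdd_aboveI[of _ "norm n"]) blast
    have Nle: "\<And>i. \<bar>n \<bullet> d i\<bar> \<le> N" unfolding N_def using bddN by (intro cSUP_upper) auto
    have nsr_eq: "nsr K e \<alpha> v\<epsilon> = N / m"
      using ne unfolding nsr_def N_def m_def I_def[symmetric] n_def d_def nk_def by simp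
    define M where "M = Max ((\<lambda>j. \<bar>s \<bullet> d j\<bar>) ` I)"
    have "M \<in> (\<lambda>j. \<bar>s \<bullet> d j\<bar>) ` I" unfolding M_def using fin ne by (intro Max_in) auto
    then obtain j1 where j1: "j1 \<in> I" "M = \<bar>s \<bullet> d j1\<bar>" by auto
    have Mge: "\<forall>j\<in>I. \<bar>s \<bullet> d j\<bar> \<le> M" unfolding M_def using fin by auto
    obtain j0 where "j0 \<in> I" and j0: "\<forall>j\<in>I. \<bar>\<gamma> j\<bar> * (1 - ch) \<le> \<bar>s \<bullet> d j0\<bar>"
      using DD[OF fin ne, of d \<gamma>] nd chl unfolding ch_def s_def by auto
    have "m * (1 - ch) \<le> \<bar>\<gamma> jn\<bar> * (1 - ch)" using mle gjn chl by (intro mult_right_mono) auto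
    also have "\<dots> \<le> \<bar>s \<bullet> d j0\<bar>" using j0 jn by auto
    also have "\<dots> \<le> M" using Mge \<open>j0 \<in> I\<close> by auto
    finally have Mlow: "m * (1 - ch) \<le> M" .
    define c where "c = pinv K e I (d k)"
    have c0: "\<forall>i. i \<notin> I \<longrightarrow> c i = 0" and co: "\<forall>j\<in>I. (d k - (\<Sum>i\<in>I. c i *\<^sub>R d i)) \<bullet> d j = 0"
      using pinv_props[OF fin ndI chI, of "d k"] unfolding c_def d_def by auto
    define L where "L = l1norm c"
    have Lsum: "L = (\<Sum>i\<in>I. \<bar>c i\<bar>)" unfolding L_def using c0 fin by (intro l1norm_fin) auto
    have bddS: "bdd_above ((\<lambda>i. l1norm (pinv K e I (dict K e i))) ` (- I))"
    proof (intro bdd_aboveI[of _ "real (card I) * (1 / (1 - cohd (dict K e) I))"])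
      fix x assume "x \<in> (\<lambda>i. l1norm (pinv K e I (dict K e i))) ` (- I)"
      then obtain i where "x = l1norm (pinv K e I (dict K e i))" by auto
      thus "x \<le> real (card I) * (1 / (1 - cohd (dict K e) I))"
        using pinv_l1_bound[OF fin ndI chI, of "dict K e i"] nd d_def by simp
    qed
    have LS: "L \<le> (SUP i\<in>- I. l1norm (pinv K e I (dict K e i)))"
      unfolding L_def c_def d_def using bddS kI by (intro cSUP_upper) auto
    have hyp: "(SUP i\<in>- I. l1norm (pinv K e I (dict K e i))) < 1 - 2 * (N / m) * (1 / (1 - ch))"
      using assms(8) nsr_eq unfolding I_def[symmetric] coh_eq ch_def d_def by simp
    have "s \<bullet> d k = s \<bullet> (\<Sum>i\<in>I. c i *\<^sub>R d i) + s \<bullet> (d k - (\<Sum>i\<in>I. c i *\<^sub>R d i))"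
      by (simp add: inner_diff_right)
    also have "s \<bullet> (d k - (\<Sum>i\<in>I. c i *\<^sub>R d i)) = 0"
      unfolding s_def inner_sum_sc2 using co by (simp add: inner_commute)
    finally have skc: "s \<bullet> d k = (\<Sum>i\<in>I. c i * (s \<bullet> d i))" by (simp add: inner_sum_sc)
    have "\<bar>s \<bullet> d k\<bar> \<le> (\<Sum>i\<in>I. \<bar>c i * (s \<bullet> d i)\<bar>)" unfolding skc by (rule sum_abs)
    also have "\<dots> \<le> (\<Sum>i\<in>I. \<bar>c i\<bar> * M)" using Mge by (intro sum_mono) (auto simp: abs_mult intro: mult_left_mono)
    also have "\<dots> = L * M" by (simp add: Lsum sum_distrib_right)
    finally have sk: "\<bar>s \<bullet> d k\<bar> \<le> L * M" .
    have rk: "\<bar>r \<bullet> d k\<bar> \<le> L * M + N" using sk Nle[of k] unfolding rns inner_add_left by linarith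
    have rj1: "M - N \<le> \<bar>r \<bullet> d j1\<bar>" using j1 Nle[of j1] unfolding rns inner_add_left by linarith
    have "\<bar>r \<bullet> d j1\<bar> \<le> \<bar>r \<bullet> d k\<bar>" using amax unfolding r_def d_def by blast
    hence key: "M * (1 - L) \<le> 2 * N" using rk rj1 by (simp add: algebra_simps)
    define a where "a = m * (1 - ch)"
    have apos: "a > 0" using mpos chl a_def by simp
    have "2 * (N / m) * (1 / (1 - ch)) = 2 * N / a" using a_def by simp
    hence "2 * N / a < 1 - L" using hyp LS by linarith
    hence "2 * N < a * (1 - L)" using apos by (simp add: divide_less_eq mult.commute)
    moreover have "N \<ge> 0" using Nle[of 0] by linarith
    ultimately have "0 < a * (1 - L)" by linarith
    hence L1: "1 - L > 0" using apos by (simp add: zero_less_mult_iff)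
    have "a * (1 - L) \<le> M * (1 - L)"
      using Mlow a_def L1 by (intro mult_right_mono) auto
    note calculation = \<open>2 * N < a * (1 - L)\<close> this
    have "2 * N < M * (1 - L)" using calculation by linarith
    thus False using key by simp
  qed
  have inv: "J \<subseteq> I \<and> (\<forall>i. i \<notin> J \<longrightarrow> \<beta> i = 0) \<and> (J = I \<longrightarrow> norm (v\<epsilon> - K (\<Sum>i\<in>J. \<beta> i *\<^sub>R e i)) \<le> \<epsilon>)"
    if "omp_reach K e \<epsilon> v\<epsilon> J \<beta>" for J \<beta>
    using that
  proof (induction rule: omp_reach.induct)
    case init
    have "{} = I \<longrightarrow> norm (v\<epsilon> - K (\<Sum>i\<in>{}. 0 *\<^sub>R e i)) \<le> \<epsilon>"
      using neps n_def by auto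
    thus ?case by simp
  next
    case (step J \<beta> k \<beta>')
    have kI: "k \<in> I" using sel[OF step.hyps(1)] step.IH step.hyps(2,3) by blast
    have sub: "insert k J \<subseteq> I" using kI step.IH by blast
    have last: "norm (v\<epsilon> - K (\<Sum>i\<in>insert k J. \<beta>' i *\<^sub>R e i)) \<le> \<epsilon>" if eq: "insert k J = I"
    proof -
      have "(norm (v\<epsilon> - K (\<Sum>i\<in>insert k J. \<beta>' i *\<^sub>R e i)))\<^sup>2 \<le> (norm (v\<epsilon> - K (\<Sum>i\<in>insert k J. \<alpha> i *\<^sub>R e i)))\<^sup>2"
        using step.hyps(5) aI eq by blast
      also have "\<dots> = (norm n)\<^sup>2" using eq n_def by simp
      also have "\<dots> \<le> \<epsilon>\<^sup>2" using neps by (simp add: power_mono)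
      finally show ?thesis using eps0 by (simp add: power2_le_iff_abs_le)
    qed
    show ?case using sub step.hyps(4) last by blast
  qed
  define C where "C = 1 + (\<Sum>j\<in>I. 2 / ((1 - ch) * nk j))"
  have Cpos: "C > 0"
  proof -
    have "(\<Sum>j\<in>I. 2 / ((1 - ch) * nk j)) \<ge> 0" using chl nkp by (intro sum_nonneg) (simp add: less_imp_le)
    thus ?thesis using C_def by simp
  qed
  show ?thesis
  proof (intro exI[of _ C] conjI allI impI Cpos)
    fix \<alpha>h assume "omp_result K e \<epsilon> v\<epsilon> \<alpha>h"
    then obtain J where rJ: "omp_reach K e \<epsilon> v\<epsilon> J \<alpha>h" and res: "norm (v\<epsilon> - K (\<Sum>i\<in>J. \<alpha>h i *\<^sub>R e i)) \<le> \<epsilon>"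
      unfolding omp_result_def by blast
    have JI: "J \<subseteq> I" and h0: "\<forall>i. i \<notin> J \<longrightarrow> \<alpha>h i = 0" using inv[OF rJ] by auto
    have sJ: "(\<Sum>i\<in>J. \<alpha>h i *\<^sub>R e i) = (\<Sum>i\<in>I. \<alpha>h i *\<^sub>R e i)"
      using fin JI h0 by (intro sum.mono_neutral_left) auto
    define \<gamma> where "\<gamma> = (\<lambda>j. (\<alpha>h j - \<alpha> j) * nk j)"
    define x where "x = (\<Sum>j\<in>I. \<gamma> j *\<^sub>R d j)"
    have "x = K (\<Sum>i\<in>I. (\<alpha>h i - \<alpha> i) *\<^sub>R e i)" unfolding Ks x_def \<gamma>_def ..
    also have "\<dots> = K (\<Sum>i\<in>I. \<alpha>h i *\<^sub>R e i) - K (\<Sum>i\<in>I. \<alpha> i *\<^sub>R e i)"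
      by (simp add: K.diff[symmetric] scaleR_diff_left sum_subtractf)
    also have "\<dots> = n - (v\<epsilon> - K (\<Sum>i\<in>J. \<alpha>h i *\<^sub>R e i))" unfolding n_def sJ by simp
    finally have "norm x \<le> norm n + norm (v\<epsilon> - K (\<Sum>i\<in>J. \<alpha>h i *\<^sub>R e i))"
      using norm_triangle_ineq4 by metis
    hence nx: "norm x \<le> 2 * \<epsilon>" using neps res by linarith
    have d0: "\<forall>i. i \<notin> I \<longrightarrow> \<alpha>h i - \<alpha> i = 0" using aI h0 JI by auto
    have "l1norm (\<lambda>i. \<alpha>h i - \<alpha> i) = (\<Sum>i\<in>I. \<bar>\<alpha>h i - \<alpha> i\<bar>)" using d0 fin by (intro l1norm_fin) auto
    also have "\<dots> \<le> (\<Sum>i\<in>I. 2 / ((1 - ch) * nk i) * \<epsilon>)"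
    proof (cases "I = {}")
      case True thus ?thesis by simp
    next
      case ne: False
      obtain j0 where "j0 \<in> I" and j0: "\<forall>j\<in>I. \<bar>\<gamma> j\<bar> * (1 - ch) \<le> \<bar>x \<bullet> d j0\<bar>"
        using DD[OF fin ne, of d \<gamma>] nd chl unfolding ch_def x_def by auto
      have "\<bar>x \<bullet> d j0\<bar> \<le> norm x" using abs_inner_le nd by blast
      show ?thesis
      proof (intro sum_mono)
        fix i assume i: "i \<in> I"
        have "\<bar>\<alpha>h i - \<alpha> i\<bar> * ((1 - ch) * nk i) = \<bar>\<gamma> i\<bar> * (1 - ch)"
          using nkp[rule_format, of i] by (simp add: \<gamma>_def abs_mult)
        also have "\<dots> \<le> 2 * \<epsilon>" using j0 i \<open>\<bar>x \<bullet> d j0\<bar> \<le> norm x\<close> nx by fastforce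
        finally have "\<bar>\<alpha>h i - \<alpha> i\<bar> * ((1 - ch) * nk i) \<le> 2 * \<epsilon>" .
        moreover have "(1 - ch) * nk i > 0" using chl nkp by simp
        ultimately show "\<bar>\<alpha>h i - \<alpha> i\<bar> \<le> 2 / ((1 - ch) * nk i) * \<epsilon>"
          by (simp add: pos_le_divide_eq field_simps)
      qed
    qed
    also have "\<dots> = (C - 1) * \<epsilon>" unfolding C_def by (simp add: sum_distrib_right)
    also have "\<dots> \<le> C * \<epsilon>" using eps0 by (simp add: algebra_simps)
    finally show "l1norm (\<lambda>i. \<alpha>h i - \<alpha> i) \<le> C * \<epsilon>" .
  qed
qed

end
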